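(* Let $I\subset(0,\infty)$ be an interval and let $f:I\to\mathbb{R}$ be differentiable on the interior $I^\circ$ of $I$. Let $m\in(0,1]$, $\alpha\in[0,1]$, $q\ge 1$ and $0<\theta\le 1$, and let $a,b$ be real numbers with $a<b$ and $a,\,b/m\in I^\circ$, such that $f'\in L[a,b]$. Suppose that $|f'|^q$ is harmonically $(\alpha,m)$-convex on $[a,b/m]$. Then $$\left|I_f(g;\theta,a,b)\right|\le \frac{ab(b-a)}{2}\,C_4(\theta;a,b)^{1-1/q}\left[C_5(\theta;\alpha;a,b)\,|f'(a)|^q+m\,C_6(\theta;\alpha;a,b)\,|f'(b/m)|^q\right]^{1/q},$$ where $$C_4(\theta;a,b)=\frac{b^{-2}}{\theta+1}\,{}_2F_1\!\left(2,1;\theta+2;1-\tfrac{a}{b}\right)-\frac{b^{-2}}{\theta+1}\,{}_2F_1\!\left(2,\theta+1;\theta+2;1-\tfrac{a}{b}\right)+\left(\frac{a+b}{2}\right)^{-2}\frac{1}{\theta+1}\,{}_2F_1\!\left(2,\theta+1;\theta+2;\tfrac{b-a}{b+a}\right),$$ $$C_5(\theta;\alpha;a,b)=\frac{b^{-2}}{\theta+\alpha+1}\,{}_2F_1\!\left(2,1;\theta+\alpha+2;1-\tfrac{a}{b}\right)-\frac{\beta(\theta+1,\alpha+1)}{b^{2}}\,{}_2F_1\!\left(2,\theta+1;\theta+\alpha+2;1-\tfrac{a}{b}\right)+\frac{\beta(\theta+1,\alpha+1)}{(a+b)^2\,2^{\alpha-2}}\,{}_2F_1\!\left(2,\theta+1;\theta+\alpha+2;\tfrac{b-a}{b+a}\right),$$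 $$C_6(\theta;\alpha;a,b)=C_4(\theta;a,b)-C_5(\theta;\alpha;a,b).$$
   Context: A function $h:J\to\mathbb{R}$ on an interval $J\subset(0,\infty)$ is called harmonically $(\alpha,m)$-convex (with $\alpha\in[0,1]$, $m\in(0,1]$) if $h\left(\frac{mxy}{mty+(1-t)x}\right)\le t^{\alpha}h(x)+m(1-t^{\alpha})h(y)$ for all $x,y\in J$ and $t\in[0,1]$ (for which the left-hand side is defined, i.e. the argument lies in $J$). For $\varphi\in L[c,d]$ and $\theta>0$ the Riemann–Liouville integrals are $J^{\theta}_{c+}\varphi(x)=\frac{1}{\Gamma(\theta)}\int_c^x (x-t)^{\theta-1}\varphi(t)\,dt$ for $x>c$ and $J^{\theta}_{d-}\varphi(x)=\frac{1}{\Gamma(\theta)}\int_x^d (t-x)^{\theta-1}\varphi(t)\,dt$ for $x<d$, where $\Gamma$ is the Euler Gamma function. With $g(x)=1/x$, define $$I_f(g;\theta,a,b)=\frac{f(a)+f(b)}{2}-\frac{\Gamma(\theta+1)}{2}\left(\frac{ab}{b-a}\right)^{\theta}\left\{J^{\theta}_{1/a-}(f\circ g)(1/b)+J^{\theta}_{1/b+}(f\circ g)(1/a)\right\}.$$ $\beta(x,y)=\int_0^1 t^{x-1}(1-t)^{y-1}dt$ ($x,y>0$) is the Beta function, and the hypergeometric function is ${}_2F_1(a,b;c;z)=\frac{1}{\beta(b,c-b)}\int_0^1 t^{b-1}(1-t)^{c-b-1}(1-zt)^{-a}dt$ for $c>b>0$, $|z|<1$. *)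

theory Defs
  imports "HOL-Analysis.Analysis"
begin

definition tpow :: "real \<Rightarrow> real \<Rightarrow> real" where
  "tpow t \<alpha> = (if \<alpha> = 0 then 1 else t powr \<alpha>)"

definition harm_alpha_m_convex_on :: "real set \<Rightarrow> real \<Rightarrow> real \<Rightarrow> (real \<Rightarrow> real) \<Rightarrow> bool" where
  "harm_alpha_m_convex_on J \<alpha> m h \<longleftrightarrow>
     (\<forall>x\<in>J. \<forall>y\<in>J. \<forall>t\<in>{0..1}.
        m * x * y / (m * t * y + (1 - t) * x) \<in> J \<longrightarrow>
        h (m * x * y / (m * t * y + (1 - t) * x)) \<le> tpow t \<alpha> * h x + m * (1 - tpow t \<alpha>) * h y)"

definition RL_left :: "real \<Rightarrow> real \<Rightarrow> (real \<Rightarrow> real) \<Rightarrow> real \<Rightarrow> real" where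
  "RL_left \<theta> c \<phi> x = (1 / Gamma \<theta>) * integral {c..x} (\<lambda>t. (x - t) powr (\<theta> - 1) * \<phi> t)"

definition RL_right :: "real \<Rightarrow> real \<Rightarrow> (real \<Rightarrow> real) \<Rightarrow> real \<Rightarrow> real" where
  "RL_right \<theta> d \<phi> x = (1 / Gamma \<theta>) * integral {x..d} (\<lambda>t. (t - x) powr (\<theta> - 1) * \<phi> t)"

text \<open>I_f(g; theta, a, b) with g(x) = 1/x.\<close>
definition I_f :: "(real \<Rightarrow> real) \<Rightarrow> real \<Rightarrow> real \<Rightarrow> real \<Rightarrow> real" where
  "I_f f \<theta> a b = (f a + f b) / 2
     - Gamma (\<theta> + 1) / 2 * (a * b / (b - a)) powr \<theta>
       * (RL_right \<theta> (1 / a) (\<lambda>x. f (1 / x)) (1 / b) + RL_left \<theta> (1 / b) (\<lambda>x. f (1 / x)) (1 / a))"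

text \<open>Gauss hypergeometric function via Euler's integral (c > b > 0, |z| < 1).\<close>
definition hyp2F1 :: "real \<Rightarrow> real \<Rightarrow> real \<Rightarrow> real \<Rightarrow> real" where
  "hyp2F1 a b c z = (1 / Beta b (c - b)) *
     integral {0..1} (\<lambda>t. t powr (b - 1) * (1 - t) powr (c - b - 1) * (1 - z * t) powr (- a))"

definition C4 :: "real \<Rightarrow> real \<Rightarrow> real \<Rightarrow> real" where
  "C4 \<theta> a b =
     b powr (-2) / (\<theta> + 1) * hyp2F1 2 1 (\<theta> + 2) (1 - a / b)
   - b powr (-2) / (\<theta> + 1) * hyp2F1 2 (\<theta> + 1) (\<theta> + 2) (1 - a / b)
   + ((a + b) / 2) powr (-2) * (1 / (\<theta> + 1)) * hyp2F1 2 (\<theta> + 1) (\<theta> + 2) ((b - a) / (b + a))"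

definition C5 :: "real \<Rightarrow> real \<Rightarrow> real \<Rightarrow> real \<Rightarrow> real" where
  "C5 \<theta> \<alpha> a b =
     b powr (-2) / (\<theta> + \<alpha> + 1) * hyp2F1 2 1 (\<theta> + \<alpha> + 2) (1 - a / b)
   - Beta (\<theta> + 1) (\<alpha> + 1) / b\<^sup>2 * hyp2F1 2 (\<theta> + 1) (\<theta> + \<alpha> + 2) (1 - a / b)
   + Beta (\<theta> + 1) (\<alpha> + 1) / ((a + b)\<^sup>2 * 2 powr (\<alpha> - 2))
       * hyp2F1 2 (\<theta> + 1) (\<theta> + \<alpha> + 2) ((b - a) / (b + a))"

definition C6 :: "real \<Rightarrow> real \<Rightarrow> real \<Rightarrow> real \<Rightarrow> real" where
  "C6 \<theta> \<alpha> a b = C4 \<theta> a b - C5 \<theta> \<alpha> a b"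

end

theory Submission
  imports Defs
begin

lemma Gamma_plus1_real: "(z::real) > 0 \<Longrightarrow> Gamma (z + 1) = z * Gamma z"
  by (rule Gamma_plus1) (auto elim!: nonpos_Ints_cases)

lemma Beta_pos: "(x::real) > 0 \<Longrightarrow> y > 0 \<Longrightarrow> Beta x y > 0"
  unfolding Beta_def by simp

lemma Beta_1: assumes "(y::real) > 0" shows "Beta 1 y = 1 / y"
proof -
  have g: "Gamma y > 0" using assms by simp
  show ?thesis unfolding Beta_def using Gamma_plus1_real[OF assms] g by (simp add: add.commute)
qed

lemma bern_powr:
  fixes u q :: real assumes "0 \<le> u" "1 \<le> q"
  shows "u powr (1/q) \<le> u / q + 1 - 1/q"
proof (cases "u = 0")
  case True thus ?thesis using assms by simp
next
  case False
  hence u: "u > 0" using assms by simp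
  have "u powr (1/q) = exp ((1/q) * ln u + (1 - 1/q) * ln 1)" using u by (simp add: powr_def)
  also have "\<dots> \<le> (1/q) * exp (ln u) + (1 - 1/q) * exp (ln 1)"
    using convex_onD[OF exp_convex, of "1 - 1/q" "ln u" "ln 1"] assms
    by (simp add: algebra_simps)
  finally show ?thesis using u by (simp add: algebra_simps)
qed

lemma powr_subadd:
  fixes x y t :: real assumes "0 \<le> x" "0 \<le> y" "0 < t" "t \<le> 1"
  shows "(x + y) powr t \<le> x powr t + y powr t"
proof (cases "x + y = 0")
  case True thus ?thesis using assms by simp
next
  case False
  hence s: "x + y > 0" using assms by simp
  have le1: "x/(x+y) \<le> 1" "y/(x+y) \<le> 1" using assms s by auto
  have h1: "x / (x+y) \<le> (x/(x+y)) powr t"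
    using powr_mono'[of t 1 "x/(x+y)"] assms s le1 by (cases "x = 0") auto
  have h2: "y / (x+y) \<le> (y/(x+y)) powr t"
    using powr_mono'[of t 1 "y/(x+y)"] assms s le1 by (cases "y = 0") auto
  have "x/(x+y) + y/(x+y) = 1" using s by (simp add: add_divide_distrib[symmetric])
  hence "1 \<le> (x/(x+y)) powr t + (y/(x+y)) powr t"
    using h1 h2 by linarith
  also have "\<dots> = (x powr t + y powr t) / (x+y) powr t"
    using assms s by (simp add: powr_divide add_divide_distrib)
  finally show ?thesis using s by (simp add: field_simps)
qed

lemma tpow_nonneg: "0 \<le> t \<Longrightarrow> 0 \<le> tpow t e" by (simp add: tpow_def)
lemma tpow_le1: "0 \<le> t \<Longrightarrow> t \<le> 1 \<Longrightarrow> 0 \<le> e \<Longrightarrow> tpow t e \<le> 1"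
  by (simp add: tpow_def powr_le1)
lemma tpow_pos_eq: "0 < t \<Longrightarrow> tpow t e = t powr e" by (simp add: tpow_def)
lemma tpow_mult: "0 \<le> s \<Longrightarrow> 0 \<le> t \<Longrightarrow> tpow (s * t) e = tpow s e * tpow t e"
  by (simp add: tpow_def powr_mult)
lemma continuous_on_tpow:
  assumes "continuous_on S h" "\<And>x. x \<in> S \<Longrightarrow> 0 \<le> h x" "0 \<le> e"
  shows "continuous_on S (\<lambda>x. tpow (h x) e)"
proof (cases "e = 0")
  case True thus ?thesis by (simp add: tpow_def)
next
  case False
  have "continuous_on S (\<lambda>x. h x powr e)"
    by (rule continuous_on_powr') (use assms False in auto)
  thus ?thesis using False by (simp add: tpow_def)
qed

lemma powr_m2: "0 < (x::real) \<Longrightarrow> x powr (-2) = 1 / x^2"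
  by (simp add: powr_minus divide_inverse)

lemma tpow_2: "tpow 2 e = 2 powr e" by (simp add: tpow_def)

definition Ap :: "real \<Rightarrow> real \<Rightarrow> real \<Rightarrow> real" where
  "Ap a b s = b - (b - a) * s"

lemma Ap_pos: "0 < a \<Longrightarrow> a < b \<Longrightarrow> 0 \<le> s \<Longrightarrow> s \<le> 1 \<Longrightarrow> Ap a b s > 0"
  unfolding Ap_def
proof -
  assume h: "0 < a" "a < b" "0 \<le> s" "s \<le> 1"
  have "(b - a) * s \<le> b - a" using h mult_left_mono[of s 1 "b-a"] by simp
  thus "b - (b - a) * s > 0" using h by linarith
qed

lemma cont_Ap: "continuous_on S (\<lambda>s. Ap a b s)" unfolding Ap_def by (intro continuous_intros)

lemma aux_cancel: "0 < c \<Longrightarrow> 0 < b \<Longrightarrow> b powr (-2) / c * ((1/(1/c)) * (b^2*I)) = (I::real)"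
  by (simp add: powr_m2)

lemma term1:
  fixes a b \<theta> e :: real
  assumes ab: "0 < a" "a < b" and th: "0 < \<theta>" and e: "0 \<le> e"
  shows "b powr (-2) / (\<theta> + e + 1) * hyp2F1 2 1 (\<theta> + e + 2) (1 - a / b)
       = integral {0..1} (\<lambda>s. (1 - s) powr \<theta> * tpow (1 - s) e / (Ap a b s)^2)"
proof -
  have B: "Beta 1 (\<theta> + e + 2 - 1) = 1 / (\<theta> + e + 1)"
    using Beta_1[of "\<theta> + e + 1"] th e by (simp add: add_ac)
  have "integral {0..1} (\<lambda>t. t powr (1 - 1) * (1 - t) powr (\<theta> + e + 2 - 1 - 1) * (1 - (1 - a / b) * t) powr (- 2))
      = integral {0..1} (\<lambda>s. b^2 * ((1 - s) powr \<theta> * tpow (1 - s) e / (Ap a b s)^2))"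
  proof (rule integral_spike[of "{0,1}"])
    show "negligible {0::real,1}" by simp
    fix s :: real assume s: "s \<in> {0..1} - {0,1}"
    hence s0: "0 < s" "s < 1" by auto
    have A: "1 - (1 - a / b) * s = Ap a b s / b" using ab by (simp add: Ap_def field_simps)
    have Apos: "Ap a b s > 0" using Ap_pos[of a b s] ab s0 by simp
    show "b^2 * ((1 - s) powr \<theta> * tpow (1 - s) e / (Ap a b s)^2) =
          s powr (1 - 1) * (1 - s) powr (\<theta> + e + 2 - 1 - 1) * (1 - (1 - a / b) * s) powr (- 2)"
      using s0 Apos ab unfolding A
      by (simp add: powr_m2 tpow_pos_eq powr_add field_simps)
  qed
  also have "\<dots> = b^2 * integral {0..1} (\<lambda>s. (1 - s) powr \<theta> * tpow (1 - s) e / (Ap a b s)^2)"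
    by (rule integral_mult_right)
  finally have "hyp2F1 2 1 (\<theta> + e + 2) (1 - a / b) = (1 / (1 / (\<theta> + e + 1))) * (b^2 *
      integral {0..1} (\<lambda>s. (1 - s) powr \<theta> * tpow (1 - s) e / (Ap a b s)^2))"
    unfolding hyp2F1_def B by simp
  thus ?thesis using aux_cancel[of "\<theta> + e + 1" b] ab th e by simp
qed

lemma hyp_shape:
  assumes "0 < \<theta>" "0 \<le> e"
  shows "hyp2F1 2 (\<theta> + 1) (\<theta> + e + 2) z = (1 / Beta (\<theta> + 1) (e + 1)) *
     integral {0..1} (\<lambda>t. t powr \<theta> * (1 - t) powr e * (1 - z * t) powr (-2))"
proof -
  have 1: "\<theta> + e + 2 - (\<theta> + 1) = e + 1" "\<theta> + 1 - 1 = \<theta>" "\<theta> + e + 2 - (\<theta> + 1) - 1 = e" by simp_all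
  show ?thesis unfolding hyp2F1_def 1 by simp
qed

lemma term2:
  fixes a b \<theta> e :: real
  assumes ab: "0 < a" "a < b" and th: "0 < \<theta>" and e: "0 \<le> e"
  shows "Beta (\<theta> + 1) (e + 1) / b\<^sup>2 * hyp2F1 2 (\<theta> + 1) (\<theta> + e + 2) (1 - a / b)
       = integral {0..1} (\<lambda>s. s powr \<theta> * tpow (1 - s) e / (Ap a b s)^2)"
proof -
  have Bp: "Beta (\<theta> + 1) (e + 1) > 0" using th e by (intro Beta_pos) auto
  have "integral {0..1} (\<lambda>t. t powr \<theta> * (1 - t) powr e * (1 - (1 - a / b) * t) powr (-2))
      = integral {0..1} (\<lambda>s. b^2 * (s powr \<theta> * tpow (1 - s) e / (Ap a b s)^2))"
  proof (rule integral_spike[of "{0,1}"])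
    show "negligible {0::real,1}" by simp
    fix s :: real assume s: "s \<in> {0..1} - {0,1}"
    hence s0: "0 < s" "s < 1" by auto
    have A: "1 - (1 - a / b) * s = Ap a b s / b" using ab by (simp add: Ap_def field_simps)
    have Apos: "Ap a b s > 0" using Ap_pos[of a b s] ab s0 by simp
    show "b^2 * (s powr \<theta> * tpow (1 - s) e / (Ap a b s)^2) =
          s powr \<theta> * (1 - s) powr e * (1 - (1 - a / b) * s) powr (- 2)"
      using s0 Apos ab unfolding A
      by (simp add: powr_m2 tpow_pos_eq field_simps)
  qed
  also have "\<dots> = b^2 * integral {0..1} (\<lambda>s. s powr \<theta> * tpow (1 - s) e / (Ap a b s)^2)"
    by (rule integral_mult_right)
  finally show ?thesis unfolding hyp_shape[OF th e] using Bp ab by simp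
qed

lemma cont_F3:
  assumes ab: "0 < a" "a < b" and th: "0 < \<theta>" and e: "0 \<le> e"
  shows "continuous_on {0..1} (\<lambda>t. t powr \<theta> * tpow (1 - t) e / (1 - (b - a) / (b + a) * t)^2)"
proof -
  have pos: "1 - (b - a) / (b + a) * t > 0" if "t \<in> {0..1}" for t
  proof -
    have "(b - a) / (b + a) * t \<le> (b - a) / (b + a)" using that ab
      by (intro mult_left_le) auto
    moreover have "(b - a) / (b + a) < 1" using ab by simp
    ultimately show ?thesis by linarith
  qed
  have c0: "continuous_on {0..1} (\<lambda>t::real. t powr \<theta>)"
    by (rule continuous_on_powr') (use th in \<open>auto intro: continuous_intros\<close>)
  have c0': "continuous_on {0..1} (\<lambda>t::real. tpow (1 - t) e)"
    by (rule continuous_on_tpow) (use e in \<open>auto intro: continuous_intros\<close>)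
  have c1: "continuous_on {0..1} (\<lambda>t::real. t powr \<theta> * tpow (1 - t) e)"
    by (rule continuous_on_mult[OF c0 c0'])
  have c2: "continuous_on {0..1} (\<lambda>t::real. (1 - (b - a) / (b + a) * t)^2)"
    by (intro continuous_intros)
  show ?thesis
    by (rule continuous_on_divide[OF c1 c2]) (use pos in force)
qed

definition F3 :: "real \<Rightarrow> real \<Rightarrow> real \<Rightarrow> real \<Rightarrow> real \<Rightarrow> real" where
  "F3 a b \<theta> e s = 2 * (max 0 (2 * s - 1)) powr \<theta> * tpow (1 - s) e / (Ap a b s)^2"

lemma aux3: "K > 0 \<Longrightarrow> A > 0 \<Longrightarrow> E > 0 \<Longrightarrow>
  4/(K^2*E) * (2 * (P * (E * T) / (2*A/K)^2)) = 2 * P * T / (A::real)^2"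
  by (simp add: field_simps power2_eq_square)

lemma term3:
  fixes a b \<theta> e :: real
  assumes ab: "0 < a" "a < b" and th: "0 < \<theta>" and e: "0 \<le> e"
  shows "(F3 a b \<theta> e has_integral
     (Beta (\<theta> + 1) (e + 1) / ((a + b)\<^sup>2 * 2 powr (e - 2)) * hyp2F1 2 (\<theta> + 1) (\<theta> + e + 2) ((b - a) / (b + a)))) {0..1}"
proof -
  define z where "z = (b - a) / (b + a)"
  define u where "u = (\<lambda>t. t powr \<theta> * tpow (1 - t) e / (1 - z * t)^2)"
  have Bp: "Beta (\<theta> + 1) (e + 1) > 0" using th e by (intro Beta_pos) auto
  have zpos: "1 - z * t > 0" if "t \<in> {0..1}" for t
  proof -
    have "z * t \<le> z" unfolding z_def using that ab by (intro mult_left_le) auto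
    moreover have "z < 1" unfolding z_def using ab by simp
    ultimately show ?thesis by linarith
  qed
  have cu: "continuous_on {0..1} u" unfolding u_def z_def using cont_F3[OF ab th e] .
  have hy: "hyp2F1 2 (\<theta> + 1) (\<theta> + e + 2) z = (1 / Beta (\<theta> + 1) (e + 1)) * integral {0..1} u"
    unfolding hyp_shape[OF th e]
  proof (intro arg_cong[where f = "\<lambda>x. _ * x"] integral_spike[of "{1}"])
    show "negligible {1::real}" by simp
    fix t :: real assume t: "t \<in> {0..1} - {1}"
    hence "1 - t > 0" by auto
    thus "u t = t powr \<theta> * (1 - t) powr e * (1 - z * t) powr - 2"
      unfolding u_def using zpos[of t] t by (simp add: powr_m2 tpow_pos_eq)
  qed
  have sub: "((\<lambda>s. 2 *\<^sub>R u (2 * s - 1)) has_integral integral {2 * (1/2) - 1 .. 2 * 1 - 1} u) {1/2..1}"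
    by (rule has_integral_substitution[where c = 0 and d = 1]) (auto intro!: derivative_eq_intros cu)
  hence sub': "((\<lambda>s. (4 / ((a + b)\<^sup>2 * 2 powr e)) * (2 *\<^sub>R u (2 * s - 1))) has_integral
           (4 / ((a + b)\<^sup>2 * 2 powr e)) * integral {0..1} u) {1/2..1}"
    by (intro has_integral_mult_right) simp
  have right: "(F3 a b \<theta> e has_integral (4 / ((a + b)\<^sup>2 * 2 powr e)) * integral {0..1} u) {1/2..1}"
  proof (rule has_integral_eq[OF _ sub'])
    fix s :: real assume s: "s \<in> {1/2..1}"
    have Apos: "Ap a b s > 0" using Ap_pos[of a b s] ab s by simp
    have tp: "tpow (1 - (2 * s - 1)) e = 2 powr e * tpow (1 - s) e"
    proof -
      have "1 - (2 * s - 1) = 2 * (1 - s)" by simp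
      thus ?thesis using s tpow_mult[of 2 "1 - s" e] tpow_2 by simp
    qed
    have zz: "1 - z * (2 * s - 1) = 2 * Ap a b s / (a + b)"
      unfolding z_def Ap_def using ab by (simp add: field_simps)
    have mx: "max 0 (2 * s - 1) = 2 * s - 1" using s by simp
    show "4 / ((a + b)\<^sup>2 * 2 powr e) * (2 *\<^sub>R u (2 * s - 1)) = F3 a b \<theta> e s"
      unfolding u_def F3_def tp zz mx
      using aux3[of "a+b" "Ap a b s" "2 powr e" "(2 * s - 1) powr \<theta>" "tpow (1-s) e"] ab Apos
      by (simp add: mult.assoc)
  qed
  have left: "(F3 a b \<theta> e has_integral 0) {0..1/2}"
  proof (rule has_integral_eq[OF _ has_integral_0])
    fix s :: real assume s: "s \<in> {0..1/2}"
    hence "max 0 (2 * s - 1) = 0" by simp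
    thus "0 = F3 a b \<theta> e s" unfolding F3_def by simp
  qed
  have "(F3 a b \<theta> e has_integral (0 + (4 / ((a + b)\<^sup>2 * 2 powr e)) * integral {0..1} u)) {0..1}"
    by (rule has_integral_combine[OF _ _ left right]) auto
  moreover have "Beta (\<theta> + 1) (e + 1) / ((a + b)\<^sup>2 * 2 powr (e - 2)) * hyp2F1 2 (\<theta> + 1) (\<theta> + e + 2) z
      = (4 / ((a + b)\<^sup>2 * 2 powr e)) * integral {0..1} u"
    unfolding hy using Bp ab by (simp add: powr_diff)
  ultimately show ?thesis unfolding z_def by simp
qed

lemma cont_pow_tp:
  assumes "0 < a" "a < b" "0 < \<theta>" "0 \<le> e" and hc: "continuous_on {0..1} h" and hn: "\<And>s. s \<in> {0..1} \<Longrightarrow> 0 \<le> h s"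
  shows "continuous_on {0..1} (\<lambda>s. h s powr \<theta> * tpow (1 - s) e / (Ap a b s)^2)"
proof -
  have c0: "continuous_on {0..1} (\<lambda>s. h s powr \<theta>)"
    by (rule continuous_on_powr') (use assms in \<open>auto intro: continuous_intros\<close>)
  have c0': "continuous_on {0..1} (\<lambda>t::real. tpow (1 - t) e)"
    by (rule continuous_on_tpow) (use assms in \<open>auto intro: continuous_intros\<close>)
  have c2: "continuous_on {0..1} (\<lambda>t::real. (Ap a b t)^2)"
    by (intro continuous_intros cont_Ap)
  show ?thesis
    by (rule continuous_on_divide[OF continuous_on_mult[OF c0 c0'] c2])
       (use Ap_pos assms in force)
qed

lemma C5_int:
  fixes a b \<theta> e :: real
  assumes ab: "0 < a" "a < b" and th: "0 < \<theta>" and e: "0 \<le> e"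
  shows "((\<lambda>s. ((1 - s) powr \<theta> - s powr \<theta>) * tpow (1 - s) e / (Ap a b s)^2 + F3 a b \<theta> e s)
           has_integral C5 \<theta> e a b) {0..1}"
proof -
  have i1: "((\<lambda>s. (1 - s) powr \<theta> * tpow (1 - s) e / (Ap a b s)^2) has_integral
      (b powr (-2) / (\<theta> + e + 1) * hyp2F1 2 1 (\<theta> + e + 2) (1 - a / b))) {0..1}"
    unfolding term1[OF ab th e]
    by (rule integrable_integral, rule integrable_continuous_interval, rule cont_pow_tp)
       (use ab th e in \<open>auto intro: continuous_intros\<close>)
  have i2: "((\<lambda>s. s powr \<theta> * tpow (1 - s) e / (Ap a b s)^2) has_integral
      (Beta (\<theta> + 1) (e + 1) / b\<^sup>2 * hyp2F1 2 (\<theta> + 1) (\<theta> + e + 2) (1 - a / b))) {0..1}"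
    unfolding term2[OF ab th e]
    by (rule integrable_integral, rule integrable_continuous_interval, rule cont_pow_tp)
       (use ab th e in \<open>auto intro: continuous_intros\<close>)
  have "((\<lambda>s. (1 - s) powr \<theta> * tpow (1 - s) e / (Ap a b s)^2 - s powr \<theta> * tpow (1 - s) e / (Ap a b s)^2
       + F3 a b \<theta> e s) has_integral C5 \<theta> e a b) {0..1}"
    unfolding C5_def by (intro has_integral_add has_integral_diff i1 i2 term3[OF ab th e])
  thus ?thesis by (simp add: diff_divide_distrib left_diff_distrib)
qed

lemma C4_eq: assumes "0 < \<theta>" "0 < a" "a < b" shows "C4 \<theta> a b = C5 \<theta> 0 a b"
proof -
  have B: "Beta (\<theta> + 1) (0 + 1) = 1 / (\<theta> + 1)"
    using Beta_1[of "\<theta> + 1"] Beta_commute[of "\<theta> + 1" 1] assms by simp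
  have Y: "Beta (\<theta> + 1) (0 + 1) / b\<^sup>2 = b powr (-2) / (\<theta> + 1)"
    unfolding B using assms by (simp add: powr_m2)
  have Z: "Beta (\<theta> + 1) (0 + 1) / ((a + b)\<^sup>2 * 2 powr (0 - 2)) = ((a + b) / 2) powr (-2) * (1 / (\<theta> + 1))"
  proof -
    have h1: "((a + b) / 2) powr (-2) = 1 / ((a+b)/2)^2" using assms by (intro powr_m2) simp
    have h2: "(2::real) powr (0 - 2) = 1/4" by (simp add: powr_minus)
    show ?thesis unfolding B h1 h2 using assms by (simp add: field_simps power2_eq_square)
  qed
  have e: "\<theta> + 0 + 1 = \<theta> + 1" "\<theta> + 0 + 2 = \<theta> + 2" by simp_all
  show ?thesis unfolding C4_def C5_def Y Z e ..
qed

lemma bracket_nonneg: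
  fixes s \<theta> :: real assumes s: "0 \<le> s" "s \<le> 1" and th: "0 < \<theta>" "\<theta> \<le> 1"
  shows "0 \<le> ((1 - s) powr \<theta> - s powr \<theta>) - \<bar>(1 - s) powr \<theta> - s powr \<theta>\<bar> + 2 * (max 0 (2 * s - 1)) powr \<theta>"
proof (cases "s \<le> 1/2")
  case True
  hence "s powr \<theta> \<le> (1 - s) powr \<theta>" using s th by (intro powr_mono2) auto
  thus ?thesis by simp
next
  case False
  hence le: "(1 - s) powr \<theta> \<le> s powr \<theta>" using s th by (intro powr_mono2) auto
  have "s powr \<theta> = ((1 - s) + (2 * s - 1)) powr \<theta>" by simp
  also have "\<dots> \<le> (1 - s) powr \<theta> + (2 * s - 1) powr \<theta>"
    using False s th by (intro powr_subadd) auto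
  finally have sa: "s powr \<theta> \<le> (1 - s) powr \<theta> + (2 * s - 1) powr \<theta>" .
  have "max 0 (2 * s - 1) = 2 * s - 1" using False by simp
  thus ?thesis using le sa by simp
qed

definition Tt :: "real \<Rightarrow> real \<Rightarrow> real \<Rightarrow> real \<Rightarrow> real" where
  "Tt a b \<theta> e = integral {0..1} (\<lambda>s. \<bar>(1 - s) powr \<theta> - s powr \<theta>\<bar> * tpow (1 - s) e / (Ap a b s)^2)"

lemma Tt_int:
  assumes ab: "0 < a" "a < b" and th: "0 < \<theta>" and e: "0 \<le> e"
  shows "((\<lambda>s. \<bar>(1 - s) powr \<theta> - s powr \<theta>\<bar> * tpow (1 - s) e / (Ap a b s)^2) has_integral Tt a b \<theta> e) {0..1}"
proof -
  have c0: "continuous_on {0..1} (\<lambda>s::real. \<bar>(1 - s) powr \<theta> - s powr \<theta>\<bar>)"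
    by (intro continuous_intros continuous_on_powr') (use th in auto)
  have c0': "continuous_on {0..1} (\<lambda>t::real. tpow (1 - t) e)"
    by (rule continuous_on_tpow) (use assms in \<open>auto intro: continuous_intros\<close>)
  have c2: "continuous_on {0..1} (\<lambda>t::real. (Ap a b t)^2)"
    by (intro continuous_intros cont_Ap)
  have "continuous_on {0..1} (\<lambda>s. \<bar>(1 - s) powr \<theta> - s powr \<theta>\<bar> * tpow (1 - s) e / (Ap a b s)^2)"
    by (rule continuous_on_divide[OF continuous_on_mult[OF c0 c0'] c2])
       (use Ap_pos assms in force)
  thus ?thesis unfolding Tt_def
    by (intro integrable_integral integrable_continuous_interval)
qed

lemma cmp_consts:
  fixes a b \<theta> e :: real
  assumes ab: "0 < a" "a < b" and th: "0 < \<theta>" "\<theta> \<le> 1" and e: "0 \<le> e" "e \<le> 1"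
  shows "Tt a b \<theta> e \<le> C5 \<theta> e a b" "Tt a b \<theta> 0 - Tt a b \<theta> e \<le> C5 \<theta> 0 a b - C5 \<theta> e a b"
proof -
  define br where "br = (\<lambda>s::real. ((1 - s) powr \<theta> - s powr \<theta>) - \<bar>(1 - s) powr \<theta> - s powr \<theta>\<bar> + 2 * (max 0 (2 * s - 1)) powr \<theta>)"
  have D: "((\<lambda>s. br s * tpow (1 - s) e' / (Ap a b s)^2) has_integral (C5 \<theta> e' a b - Tt a b \<theta> e')) {0..1}"
    if "0 \<le> e'" for e'
  proof -
    have "((\<lambda>s. (((1 - s) powr \<theta> - s powr \<theta>) * tpow (1 - s) e' / (Ap a b s)^2 + F3 a b \<theta> e' s)
        - \<bar>(1 - s) powr \<theta> - s powr \<theta>\<bar> * tpow (1 - s) e' / (Ap a b s)^2) has_integral (C5 \<theta> e' a b - Tt a b \<theta> e')) {0..1}"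
      by (intro has_integral_diff C5_int Tt_int ab th that)
    thus ?thesis unfolding br_def F3_def by (simp add: algebra_simps add_divide_distrib diff_divide_distrib)
  qed
  have brn: "0 \<le> br s" if "s \<in> {0..1}" for s unfolding br_def using bracket_nonneg[of s \<theta>] that th by auto
  show "Tt a b \<theta> e \<le> C5 \<theta> e a b"
  proof -
    have "0 \<le> C5 \<theta> e a b - Tt a b \<theta> e"
      by (rule has_integral_nonneg[OF D[OF e(1)]])
         (use brn tpow_nonneg in \<open>auto intro!: divide_nonneg_nonneg mult_nonneg_nonneg\<close>)
    thus ?thesis by simp
  qed
  show "Tt a b \<theta> 0 - Tt a b \<theta> e \<le> C5 \<theta> 0 a b - C5 \<theta> e a b"
  proof -
    have "C5 \<theta> e a b - Tt a b \<theta> e \<le> C5 \<theta> 0 a b - Tt a b \<theta> 0"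
    proof (rule has_integral_le[OF D[OF e(1)] D])
      fix s :: real assume s: "s \<in> {0..1}"
      have "tpow (1 - s) e \<le> 1" using s e by (intro tpow_le1) auto
      hence "br s * tpow (1 - s) e \<le> br s * tpow (1 - s) 0"
        using brn[OF s] by (simp add: tpow_def mult_left_le)
      thus "br s * tpow (1 - s) e / (Ap a b s)\<^sup>2 \<le> br s * tpow (1 - s) 0 / (Ap a b s)\<^sup>2"
        by (intro divide_right_mono) auto
    qed simp
    thus ?thesis by simp
  qed
qed

lemma powr_int_shift:
  fixes p r \<theta> :: real
  assumes "p < r" "0 < \<theta>"
  shows "(\<lambda>x. (x - p) powr (\<theta> - 1)) integrable_on {p..r}"
proof -
  have "(\<lambda>x. x powr (\<theta> - 1)) integrable_on {0..r - p}"
    using integrable_on_powr_from_0[of "\<theta> - 1" "r - p"] assms by simp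
  from integrable_shift_real_ivl[OF this, of "-p"]
  show ?thesis by simp
qed

lemma powr_int_refl:
  fixes p r \<theta> :: real
  assumes "p < r" "0 < \<theta>"
  shows "(\<lambda>x. (r - x) powr (\<theta> - 1)) integrable_on {p..r}"
proof -
  have "(\<lambda>x. x powr (\<theta> - 1)) integrable_on {0..r - p}"
    using integrable_on_powr_from_0[of "\<theta> - 1" "r - p"] assms by simp
  from integrable_shift_real_ivl[OF this, of "r"]
  have "(\<lambda>x. (x + r) powr (\<theta> - 1)) integrable_on {-r..-p}" by simp
  hence "(\<lambda>x. (- x + r) powr (\<theta> - 1)) integrable_on {p..r}"
    using Henstock_Kurzweil_Integration.integrable_reflect_real[where f="\<lambda>x. (x + r) powr (\<theta>-1)" and a="-r" and b="-p"] by simp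
  thus ?thesis by simp
qed

lemma prod_integrable:
  fixes \<phi> g :: "real \<Rightarrow> real"
  assumes c: "continuous_on {p..r} \<phi>" and g: "g integrable_on {p..r}" and gn: "\<And>x. x \<in> {p..r} \<Longrightarrow> 0 \<le> g x"
  shows "(\<lambda>x. \<phi> x * g x) integrable_on {p..r}"
proof -
  have "(\<lambda>x. \<phi> x * g x) absolutely_integrable_on {p..r}"
  proof (rule absolutely_integrable_bounded_measurable_product_real)
    show "\<phi> \<in> borel_measurable (lebesgue_on {p..r})"
      by (rule continuous_imp_measurable_on_sets_lebesgue[OF c]) simp
    show "{p..r} \<in> sets lebesgue" by simp
    show "bounded (\<phi> ` {p..r})"
      by (intro compact_imp_bounded compact_continuous_image c) simp
    show "g absolutely_integrable_on {p..r}"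
      by (rule nonnegative_absolutely_integrable_1[OF g gn])
  qed
  thus ?thesis using absolutely_integrable_on_def by blast
qed

lemma ibp_main:
  fixes \<phi> \<phi>' :: "real \<Rightarrow> real"
  assumes pr: "p < r" and th: "0 < \<theta>" and c\<phi>: "continuous_on {p..r} \<phi>"
    and d\<phi>: "\<And>x. x \<in> {p<..<r} \<Longrightarrow> (\<phi> has_real_derivative \<phi>' x) (at x)"
  shows "((\<lambda>x. \<phi>' x * ((x - p) powr \<theta> - (r - x) powr \<theta>)) has_integral
    (\<phi> r * (r - p) powr \<theta> + \<phi> p * (r - p) powr \<theta>
     - \<theta> * integral {p..r} (\<lambda>x. (x - p) powr (\<theta> - 1) * \<phi> x)
     - \<theta> * integral {p..r} (\<lambda>x. (r - x) powr (\<theta> - 1) * \<phi> x))) {p..r}"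
proof -
  define K1 where "K1 = integral {p..r} (\<lambda>x. (x - p) powr (\<theta> - 1) * \<phi> x)"
  define K2 where "K2 = integral {p..r} (\<lambda>x. (r - x) powr (\<theta> - 1) * \<phi> x)"
  have i1: "(\<lambda>x. (x - p) powr (\<theta> - 1) * \<phi> x) integrable_on {p..r}"
    using prod_integrable[OF c\<phi> powr_int_shift[OF pr th]] by (simp add: mult.commute)
  have i2: "(\<lambda>x. (r - x) powr (\<theta> - 1) * \<phi> x) integrable_on {p..r}"
    using prod_integrable[OF c\<phi> powr_int_refl[OF pr th]] by (simp add: mult.commute)
  have h1: "((\<lambda>x. \<phi> x * (\<theta> * (x - p) powr (\<theta> - 1))) has_integral \<theta> * K1) {p..r}"
    unfolding K1_def
    by (rule has_integral_eq[OF _ has_integral_mult_right[OF i1[THEN integrable_integral], of \<theta>]])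
       (simp add: mult_ac)
  have h2: "((\<lambda>x. \<phi> x * (\<theta> * (r - x) powr (\<theta> - 1) * (-1))) has_integral - (\<theta> * K2)) {p..r}"
  proof -
    have "((\<lambda>x. (-\<theta>) * ((r - x) powr (\<theta> - 1) * \<phi> x)) has_integral (-\<theta>) * K2) {p..r}"
      unfolding K2_def by (rule has_integral_mult_right[OF i2[THEN integrable_integral]])
    from has_integral_eq[OF _ this, of "\<lambda>x. \<phi> x * (\<theta> * (r - x) powr (\<theta> - 1) * (-1))"]
    show ?thesis by (simp add: mult_ac)
  qed
  have cg1: "continuous_on {p..r} (\<lambda>x. (x - p) powr \<theta>)"
    by (rule continuous_on_powr') (use th in \<open>auto intro: continuous_intros\<close>)
  have cg2: "continuous_on {p..r} (\<lambda>x. (r - x) powr \<theta>)"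
    by (rule continuous_on_powr') (use th in \<open>auto intro: continuous_intros\<close>)
  have dg1: "((\<lambda>x. (x - p) powr \<theta>) has_real_derivative \<theta> * (x - p) powr (\<theta> - 1)) (at x)"
    if "x \<in> {p<..<r}" for x
  proof -
    have "((\<lambda>x. x - p) has_real_derivative 1) (at x)" by (auto intro!: derivative_eq_intros)
    from DERIV_chain2[OF has_real_derivative_powr[of "x - p" \<theta>] this] that show ?thesis by simp
  qed
  have dg2: "((\<lambda>x. (r - x) powr \<theta>) has_real_derivative \<theta> * (r - x) powr (\<theta> - 1) * (-1)) (at x)"
    if "x \<in> {p<..<r}" for x
  proof -
    have "((\<lambda>x. r - x) has_real_derivative -1) (at x)" by (auto intro!: derivative_eq_intros)
    from DERIV_chain2[OF has_real_derivative_powr[of "r - x" \<theta>] this] that show ?thesis by simp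
  qed
  have P1: "((\<lambda>x. \<phi>' x * (x - p) powr \<theta>) has_integral (\<phi> r * (r - p) powr \<theta> - \<phi> p * (p - p) powr \<theta> - \<theta> * K1)) {p..r}"
  proof (rule integration_by_parts_interior_strong[OF bounded_bilinear_mult, of "{}" p r \<phi> "\<lambda>x. (x - p) powr \<theta>"])
    show "((\<lambda>x. \<phi> x * (\<theta> * (x - p) powr (\<theta> - 1))) has_integral
      \<phi> r * (r - p) powr \<theta> - \<phi> p * (p - p) powr \<theta> - (\<phi> r * (r - p) powr \<theta> - \<phi> p * (p - p) powr \<theta> - \<theta> * K1)) {p..r}"
      using h1 by simp
  qed (use pr c\<phi> cg1 d\<phi> dg1 in \<open>auto simp: has_real_derivative_iff_has_vector_derivative\<close>)
  have P2: "((\<lambda>x. \<phi>' x * (r - x) powr \<theta>) has_integral (\<phi> r * (r - r) powr \<theta> - \<phi> p * (r - p) powr \<theta> + \<theta> * K2)) {p..r}"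
  proof (rule integration_by_parts_interior_strong[OF bounded_bilinear_mult, of "{}" p r \<phi> "\<lambda>x. (r - x) powr \<theta>"])
    show "((\<lambda>x. \<phi> x * (\<theta> * (r - x) powr (\<theta> - 1) * (-1))) has_integral
      \<phi> r * (r - r) powr \<theta> - \<phi> p * (r - p) powr \<theta> - (\<phi> r * (r - r) powr \<theta> - \<phi> p * (r - p) powr \<theta> + \<theta> * K2)) {p..r}"
      using h2 by simp
  qed (use pr c\<phi> cg2 d\<phi> dg2 in \<open>auto simp: has_real_derivative_iff_has_vector_derivative\<close>)
  from has_integral_diff[OF P1 P2]
  show ?thesis unfolding K1_def[symmetric] K2_def[symmetric]
    by (simp add: right_diff_distrib algebra_simps)
qed

lemma cont_F:
  assumes ab: "0 < a" "a < b" and th: "0 < \<theta>" and e: "0 \<le> e"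
  shows "continuous_on {0..1} (\<lambda>s. \<bar>(1 - s) powr \<theta> - s powr \<theta>\<bar> * tpow (1 - s) e / (Ap a b s)^2)"
proof -
  have c0: "continuous_on {0..1} (\<lambda>s::real. \<bar>(1 - s) powr \<theta> - s powr \<theta>\<bar>)"
    by (intro continuous_intros continuous_on_powr') (use th in auto)
  have c0': "continuous_on {0..1} (\<lambda>t::real. tpow (1 - t) e)"
    by (rule continuous_on_tpow) (use assms in \<open>auto intro: continuous_intros\<close>)
  have c2: "continuous_on {0..1} (\<lambda>t::real. (Ap a b t)^2)"
    by (intro continuous_intros cont_Ap)
  show ?thesis
    by (rule continuous_on_divide[OF continuous_on_mult[OF c0 c0'] c2])
       (use Ap_pos assms in force)
qed

lemma sub_x:
  fixes a b \<theta> e :: real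
  assumes ab: "0 < a" "a < b" and th: "0 < \<theta>" and e: "0 \<le> e"
  shows "((\<lambda>x. \<bar>(x - 1/b) powr \<theta> - (1/a - x) powr \<theta>\<bar> / x^2 * tpow ((x - 1/b) / (1/a - 1/b)) e)
     has_integral ((1/a - 1/b) powr \<theta> * (a * b * (b - a)) * Tt a b \<theta> e)) {1/b..1/a}"
proof -
  define p where "p = 1/b"
  define r where "r = 1/a"
  define L where "L = 1/a - 1/b"
  define F where "F = (\<lambda>s. \<bar>(1 - s) powr \<theta> - s powr \<theta>\<bar> * tpow (1 - s) e / (Ap a b s)^2)"
  have pr: "p < r" unfolding p_def r_def using ab by (simp add: frac_less2)
  have L: "L = r - p" "L > 0" unfolding L_def p_def r_def using ab by (auto simp: frac_less2)
  have Lab: "(b - a) / L = a * b" unfolding L_def using ab by (simp add: field_simps)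
  have cF: "continuous_on {0..1} F" unfolding F_def by (rule cont_F[OF ab th e])
  have sub: "((\<lambda>x. (-1/L) *\<^sub>R F ((r - x) / L)) has_integral
     (integral {(r - p)/L .. (r - r)/L} F - integral {(r - r)/L .. (r - p)/L} F)) {p..r}"
  proof (rule has_integral_substitution_general[of "{}" p r "\<lambda>x. (r - x) / L" 0 1 F])
    show "(\<lambda>x. (r - x) / L) ` {p..r} \<subseteq> {0..1}" using L by (auto simp: field_simps)
    show "continuous_on {p..r} (\<lambda>x. (r - x) / L)" using L by (intro continuous_intros) auto
    fix x assume "x \<in> {p..r} - {}"
    show "((\<lambda>x. (r - x) / L) has_real_derivative -1/L) (at x within {p..r})"
      using L by (auto intro!: derivative_eq_intros simp: field_simps)
  qed (use pr cF in auto)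
  have v: "integral {(r - p)/L .. (r - r)/L} F - integral {(r - r)/L .. (r - p)/L} F = - Tt a b \<theta> e"
    using L unfolding Tt_def F_def by simp
  have sub2: "((\<lambda>x. (- (L * L powr \<theta> * (a*b)^2)) * ((-1/L) *\<^sub>R F ((r - x) / L))) has_integral
      (- (L * L powr \<theta> * (a*b)^2)) * (- Tt a b \<theta> e)) {p..r}"
    by (rule has_integral_mult_right) (use sub v in simp)
  have H: "((\<lambda>x. \<bar>(x - p) powr \<theta> - (r - x) powr \<theta>\<bar> / x^2 * tpow ((x - p) / L) e) has_integral
      (- (L * L powr \<theta> * (a*b)^2)) * (- Tt a b \<theta> e)) {p..r}"
  proof (rule has_integral_eq[OF _ sub2])
    fix x assume x: "x \<in> {p..r}"
    define s where "s = (r - x) / L"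
    have s1: "1 - s = (x - p) / L" unfolding s_def using L by (simp add: field_simps)
    have pp: "0 < p" unfolding p_def using ab by simp
    have xpos: "x > 0" using x pp by (simp add: atLeastAtMost_iff)
    have As: "Ap a b s = a * b * x"
    proof -
      have "(b - a) * s = a * b * (r - x)" unfolding s_def using Lab L
        by (metis mult.commute times_divide_eq_right divide_divide_eq_right)
      moreover have "a * b * (1/a - x) = b - a * b * x" using ab by (simp add: field_simps)
      ultimately show ?thesis unfolding Ap_def r_def by linarith
    qed
    have pw: "(1 - s) powr \<theta> - s powr \<theta> = ((x - p) powr \<theta> - (r - x) powr \<theta>) / L powr \<theta>"
    proof -
      have "(1 - s) powr \<theta> = (x - p) powr \<theta> / L powr \<theta>" unfolding s1 using x L(2) by (simp add: powr_divide)
      moreover have "s powr \<theta> = (r - x) powr \<theta> / L powr \<theta>" unfolding s_def using x L(2) by (simp add: powr_divide)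
      ultimately show ?thesis by (simp add: diff_divide_distrib)
    qed
    have Lp: "L powr \<theta> > 0" using L by simp
    show "- (L * L powr \<theta> * (a * b)\<^sup>2) * ((-1/L) *\<^sub>R F ((r - x) / L)) =
        \<bar>(x - p) powr \<theta> - (r - x) powr \<theta>\<bar> / x\<^sup>2 * tpow ((x - p) / L) e"
      unfolding s_def[symmetric] F_def pw As unfolding s1 using L Lp xpos ab
      by (simp add: abs_divide field_simps power2_eq_square)
  qed
  have E: "(- (L * L powr \<theta> * (a*b)^2)) * (- Tt a b \<theta> e) = L powr \<theta> * (a * b * (b - a)) * Tt a b \<theta> e"
    unfolding L_def using ab by (simp add: field_simps power2_eq_square)
  from H[unfolded E] show ?thesis unfolding p_def r_def L_def .
qed

lemma final_arith:
  fixes K q X Y m M Ta T0 C4 C5 Lm LL :: real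
  assumes K: "K > 0" and q: "q \<ge> 1" and X: "X \<ge> 0" and Y: "Y \<ge> 0" and m: "m > 0" and M: "M > 0"
    and LL: "LL > 0" and Lm: "Lm * LL = 1"
    and c1: "Ta \<le> C5" and c2: "T0 - Ta \<le> C4 - C5" and c3: "T0 \<le> C4"
  shows "Lm / 2 * ((K powr (1/q) * (X - m*Y) / (q*K)) * (LL*M*Ta) + (K powr (1/q) * (m*Y/(q*K) + 1 - 1/q)) * (LL*M*T0))
       \<le> M/2 * (K powr (1/q) * ((C5*X + m*(C4 - C5)*Y)/(q*K) + (1 - 1/q)*C4))"
proof -
  define P where "P = K powr (1/q)"
  have P: "P > 0" unfolding P_def using K by simp
  have qK: "q * K > 0" using q K by simp
  have "Lm / 2 * ((P * (X - m*Y) / (q*K)) * (LL*M*Ta) + (P * (m*Y/(q*K) + 1 - 1/q)) * (LL*M*T0))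
      = (Lm * LL) * (M/2 * (P * ((X*Ta + m*Y*(T0 - Ta))/(q*K) + (1-1/q)*T0)))"
    using qK by (simp add: field_simps) (simp add: add_divide_distrib[symmetric] diff_divide_distrib[symmetric] algebra_simps)
  also have "\<dots> = M/2 * (P * ((X*Ta + m*Y*(T0 - Ta))/(q*K) + (1-1/q)*T0))" using Lm by simp
  also have "\<dots> \<le> M/2 * (P * ((C5*X + m*(C4 - C5)*Y)/(q*K) + (1 - 1/q)*C4))"
  proof -
    have "X*Ta \<le> X*C5" using X c1 by (intro mult_left_mono)
    moreover have "m*Y*(T0 - Ta) \<le> m*Y*(C4 - C5)" using m Y c2 by (intro mult_left_mono) auto
    ultimately have "(X*Ta + m*Y*(T0 - Ta))/(q*K) \<le> (C5*X + m*(C4 - C5)*Y)/(q*K)"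
      using qK by (intro divide_right_mono) (auto simp: algebra_simps)
    moreover have "(1-1/q)*T0 \<le> (1-1/q)*C4" using q c3 by (intro mult_left_mono) auto
    ultimately have S: "(X*Ta + m*Y*(T0 - Ta))/(q*K) + (1-1/q)*T0 \<le> (C5*X + m*(C4 - C5)*Y)/(q*K) + (1 - 1/q)*C4"
      by (rule add_mono)
    have "P * ((X*Ta + m*Y*(T0 - Ta))/(q*K) + (1-1/q)*T0) \<le> P * ((C5*X + m*(C4 - C5)*Y)/(q*K) + (1 - 1/q)*C4)"
      using P S by (intro mult_left_mono) auto
    thus ?thesis using M by (simp add: mult_left_mono)
  qed
  finally show ?thesis unfolding P_def .
qed

lemma eps_le0:
  fixes x c :: real
  assumes "\<And>\<delta>. \<delta> > 0 \<Longrightarrow> x \<le> c * \<delta>"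
  shows "x \<le> 0"
proof (rule ccontr)
  assume "\<not> x \<le> 0" hence x: "x > 0" by simp
  show False
  proof (cases "c > 0")
    case True
    have "x \<le> c * (x / (2 * c))" using assms[of "x / (2*c)"] x True by simp
    thus False using x True by (simp add: field_simps)
  next
    case False
    have "x \<le> c * 1" using assms[of 1] by simp
    thus False using x False by simp
  qed
qed

lemma ieq_arith:
  fixes A B G u v \<theta> K1 K2 :: real
  assumes "G > 0" "u * v = 1"
  shows "(A + B) / 2 - \<theta> * G / 2 * u * (1 / G * K1 + 1 / G * K2) = u / 2 * (A * v + B * v - \<theta> * K1 - \<theta> * K2)"
proof -
  have "u / 2 * (A * v + B * v - \<theta> * K1 - \<theta> * K2) = (u * v) * (A + B) / 2 - u / 2 * (\<theta> * K1 + \<theta> * K2)"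
    by (simp add: algebra_simps)
  also have "\<dots> = (A + B) / 2 - u / 2 * (\<theta> * K1 + \<theta> * K2)" using assms by simp
  finally show ?thesis using assms by (simp add: field_simps)
qed

lemma tpow_0: "tpow t 0 = 1" by (simp add: tpow_def)

lemma idn: fixes P X Y m q K V tq :: real assumes "q*K > 0"
  shows "(P * (X - m*Y) / (q*K)) * (V * tq) + (P * (m*Y/(q*K) + 1 - 1/q)) * (V * 1)
     = V * (P * ((tq*X + m*(1-tq)*Y)/(q*K) + 1 - 1/q))"
  using assms by (simp add: field_simps) (simp add: add_divide_distrib[symmetric] diff_divide_distrib[symmetric] algebra_simps)

lemma ieqT:
  fixes f :: "real \<Rightarrow> real" and \<theta> a b :: real
  assumes th0: "0 < \<theta>" and a0: "0 < a" and ab: "a < b"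
  shows "I_f f \<theta> a b = (1/(1/a - 1/b)) powr \<theta> / 2 * (f a * (1/a - 1/b) powr \<theta> + f b * (1/a - 1/b) powr \<theta>
     - \<theta> * integral {1/b..1/a} (\<lambda>x. (x - 1/b) powr (\<theta> - 1) * f (1/x))
     - \<theta> * integral {1/b..1/a} (\<lambda>x. (1/a - x) powr (\<theta> - 1) * f (1/x)))"
proof -
  have G: "Gamma \<theta> > 0" using th0 by simp
  have G1: "Gamma (\<theta> + 1) = \<theta> * Gamma \<theta>" using Gamma_plus1_real[OF th0] .
  have L: "1/a - 1/b > 0" using a0 ab by (simp add: frac_less2)
  have uv: "(1/(1/a - 1/b)) powr \<theta> * (1/a - 1/b) powr \<theta> = 1" using L ab by (simp add: powr_divide)
  have abL: "a * b / (b - a) = 1 / (1/a - 1/b)" using a0 ab by (simp add: field_simps)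
  show ?thesis
    unfolding I_f_def RL_right_def RL_left_def G1 abL
    by (rule ieq_arith[OF G uv])
qed
theorem theorem6:
  fixes f :: "real \<Rightarrow> real" and I :: "real set"
    and m \<alpha> q \<theta> a b :: real
  assumes "is_interval I" and "I \<subseteq> {0<..}"
    and "\<forall>x\<in>interior I. f differentiable (at x)"
    and "0 < m" "m \<le> 1" and "0 \<le> \<alpha>" "\<alpha> \<le> 1" and "1 \<le> q"
    and "0 < \<theta>" "\<theta> \<le> 1"
    and "a < b" and "a \<in> interior I" "b / m \<in> interior I"
    and "deriv f absolutely_integrable_on {a..b}"
    and "harm_alpha_m_convex_on {a..b/m} \<alpha> m (\<lambda>x. \<bar>deriv f x\<bar> powr q)"
  shows "\<bar>I_f f \<theta> a b\<bar> \<le> a * b * (b - a) / 2 * C4 \<theta> a b powr (1 - 1 / q)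
           * (C5 \<theta> \<alpha> a b * \<bar>deriv f a\<bar> powr q + m * C6 \<theta> \<alpha> a b * \<bar>deriv f (b / m)\<bar> powr q) powr (1 / q)"
proof -
  have m0: "0 < m" and m1: "m \<le> 1" and al0: "0 \<le> \<alpha>" and al1: "\<alpha> \<le> 1" and q1: "1 \<le> q"
    and th0: "0 < \<theta>" and th1: "\<theta> \<le> 1" and ab: "a < b" using assms by auto
  have a0: "0 < a" using assms(2) assms(12) interior_subset by fastforce
  have b0: "0 < b" using a0 ab by simp
  have bm: "b \<le> b / m" using b0 m0 m1 by (simp add: le_divide_eq mult_left_le)
  have "convex I" by (rule is_interval_convex_1[THEN iffD1, OF assms(1)])
  hence "convex (interior I)" by (rule convex_interior)
  hence ivl: "is_interval (interior I)" by (rule is_interval_convex_1[THEN iffD2])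
  have sub: "{a..b/m} \<subseteq> interior I"
  proof
    fix y assume y: "y \<in> {a..b/m}"
    have "\<forall>u\<in>interior I. \<forall>v\<in>interior I. \<forall>x. u \<le> x \<and> x \<le> v \<longrightarrow> x \<in> interior I"
      using ivl unfolding is_interval_1 .
    from this[rule_format, OF assms(12) assms(13), of y] y show "y \<in> interior I" by simp
  qed
  have dif: "(f has_real_derivative deriv f y) (at y)" if "y \<in> {a..b/m}" for y
    using sub assms(3) that DERIV_deriv_iff_real_differentiable by blast
  define p where "p = 1/b"
  define r where "r = 1/a"
  define L where "L = 1/a - 1/b"
  define M where "M = a * b * (b - a)"
  have pp: "0 < p" unfolding p_def using b0 by simp
  have pr: "p < r" unfolding p_def r_def using a0 ab by (simp add: frac_less2)
  have L: "L = r - p" "L > 0" unfolding L_def p_def r_def using a0 ab by (auto simp: frac_less2)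
  have M0: "M > 0" unfolding M_def using a0 b0 ab by simp
  have inv: "1 / x \<in> {a..b}" if "x \<in> {p..r}" for x
  proof -
    have x0: "p \<le> x" "x \<le> r" using that by auto
    have xp: "x > 0" using x0 pp by linarith
    have x: "1/b \<le> x" "x \<le> 1/a" "x > 0" using x0 xp unfolding p_def r_def by auto
    have "1/x \<le> b" using x b0 by (simp add: divide_le_eq le_divide_eq mult.commute)
    moreover have "a \<le> 1/x" using x a0 by (simp add: divide_le_eq le_divide_eq mult.commute)
    ultimately show ?thesis by simp
  qed
  define \<phi> where "\<phi> = (\<lambda>x. f (1 / x))"
  define \<phi>' where "\<phi>' = (\<lambda>x. deriv f (1 / x) * (- 1 / x^2))"
  have d\<phi>: "(\<phi> has_real_derivative \<phi>' x) (at x)" if "x \<in> {p..r}" for x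
  proof -
    have x0: "x \<noteq> 0" using that pp by auto
    have "((\<lambda>x. 1 / x) has_real_derivative (- 1 / x^2)) (at x)"
      using x0 by (auto intro!: derivative_eq_intros simp: power2_eq_square)
    from DERIV_chain2[OF dif[of "1/x"] this] show ?thesis
      using inv[OF that] bm unfolding \<phi>_def \<phi>'_def by auto
  qed
  have c\<phi>: "continuous_on {p..r} \<phi>"
    by (rule continuous_at_imp_continuous_on) (use d\<phi> DERIV_isCont in blast)
  define Pv where "Pv = \<phi> r * (r - p) powr \<theta> + \<phi> p * (r - p) powr \<theta>
     - \<theta> * integral {p..r} (\<lambda>x. (x - p) powr (\<theta> - 1) * \<phi> x)
     - \<theta> * integral {p..r} (\<lambda>x. (r - x) powr (\<theta> - 1) * \<phi> x)"
  have H: "((\<lambda>x. \<phi>' x * ((x - p) powr \<theta> - (r - x) powr \<theta>)) has_integral Pv) {p..r}"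
    unfolding Pv_def by (rule ibp_main[OF pr th0 c\<phi>]) (use d\<phi> in auto)
  have Ieq: "I_f f \<theta> a b = (1/L) powr \<theta> / 2 * Pv"
    using ieqT[OF th0 a0 ab, of f] unfolding Pv_def \<phi>_def p_def r_def L_def by simp
  define X where "X = \<bar>deriv f a\<bar> powr q"
  define Y where "Y = \<bar>deriv f (b / m)\<bar> powr q"
  have X0: "X \<ge> 0" and Y0: "Y \<ge> 0" unfolding X_def Y_def by simp_all
  define N where "N = C5 \<theta> \<alpha> a b * X + m * C6 \<theta> \<alpha> a b * Y"
  have SW: "((\<lambda>x. \<bar>(x - p) powr \<theta> - (r - x) powr \<theta>\<bar> / x^2 * tpow ((x - p) / L) e)
      has_integral (L powr \<theta> * M * Tt a b \<theta> e)) {p..r}" if "0 \<le> e" for e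
    using sub_x[OF a0 ab th0 that] unfolding p_def r_def L_def M_def by simp
  have cmp1: "Tt a b \<theta> \<alpha> \<le> C5 \<theta> \<alpha> a b" and cmp2: "Tt a b \<theta> 0 - Tt a b \<theta> \<alpha> \<le> C4 \<theta> a b - C5 \<theta> \<alpha> a b"
    using cmp_consts[OF a0 ab th0 th1 al0 al1] C4_eq[OF th0 a0 ab] by auto
  have cmp3: "Tt a b \<theta> 0 \<le> C4 \<theta> a b"
    using cmp_consts(1)[OF a0 ab th0 th1, of 0] C4_eq[OF th0 a0 ab] by auto
  have conv: "\<bar>deriv f (1/x)\<bar> powr q \<le> tpow ((x - p) / L) \<alpha> * X + m * (1 - tpow ((x - p) / L) \<alpha>) * Y"
    if x: "x \<in> {p..r}" for x
  proof -
    define t where "t = (x - p) / L"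
    have t01: "t \<in> {0..1}" unfolding t_def using x L by (auto simp: field_simps)
    have xpos: "x > 0" using x pp by auto
    have "(x - 1/b) / (1/a - 1/b) * (b - a) = a * b * x - a"
      using a0 b0 ab by (simp add: field_simps)
    hence tb: "t * (b - a) = a * b * x - a" unfolding t_def p_def L_def .
    have den: "m * t * (b / m) + (1 - t) * a = a * b * x"
      using m0 tb by (simp add: algebra_simps)
    have arg: "m * a * (b / m) / (m * t * (b / m) + (1 - t) * a) = 1 / x"
      unfolding den using m0 a0 b0 xpos by (simp add: field_simps)
    have mem: "a \<in> {a..b/m}" "b/m \<in> {a..b/m}" "1/x \<in> {a..b/m}"
      using ab bm inv[OF x] by auto
    from assms(15)[unfolded harm_alpha_m_convex_on_def] mem t01
    have "m * a * (b / m) / (m * t * (b / m) + (1 - t) * a) \<in> {a..b/m} \<longrightarrow>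
       \<bar>deriv f (m * a * (b / m) / (m * t * (b / m) + (1 - t) * a))\<bar> powr q
        \<le> tpow t \<alpha> * \<bar>deriv f a\<bar> powr q + m * (1 - tpow t \<alpha>) * \<bar>deriv f (b/m)\<bar> powr q"
      by blast
    hence "1/x \<in> {a..b/m} \<longrightarrow> \<bar>deriv f (1/x)\<bar> powr q
        \<le> tpow t \<alpha> * \<bar>deriv f a\<bar> powr q + m * (1 - tpow t \<alpha>) * \<bar>deriv f (b/m)\<bar> powr q"
      unfolding arg .
    hence "\<bar>deriv f (1/x)\<bar> powr q
        \<le> tpow t \<alpha> * \<bar>deriv f a\<bar> powr q + m * (1 - tpow t \<alpha>) * \<bar>deriv f (b/m)\<bar> powr q"
      using mem(3) by blast
    thus ?thesis unfolding t_def X_def Y_def .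
  qed
  have boundK: "\<bar>I_f f \<theta> a b\<bar> \<le> M / 2 * (K powr (1/q) * (N / (q * K) + (1 - 1/q) * C4 \<theta> a b))"
    if K: "K > 0" for K
  proof -
    define c1 where "c1 = K powr (1/q) * (X - m*Y) / (q*K)"
    define c2 where "c2 = K powr (1/q) * (m*Y/(q*K) + 1 - 1/q)"
    define Bd where "Bd = (\<lambda>x. \<bar>(x - p) powr \<theta> - (r - x) powr \<theta>\<bar> / x^2 *
        (K powr (1/q) * ((tpow ((x - p) / L) \<alpha> * X + m * (1 - tpow ((x - p) / L) \<alpha>) * Y) / (q*K) + 1 - 1/q)))"
    have qK: "q * K > 0" using q1 K by simp
    have hBd: "(Bd has_integral (c1 * (L powr \<theta> * M * Tt a b \<theta> \<alpha>) + c2 * (L powr \<theta> * M * Tt a b \<theta> 0))) {p..r}"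
    proof (rule has_integral_eq[OF _ has_integral_add[OF has_integral_mult_right[OF SW[OF al0]] has_integral_mult_right[OF SW[of 0]]]])
      fix x assume "x \<in> {p..r}"
      show "c1 * (\<bar>(x - p) powr \<theta> - (r - x) powr \<theta>\<bar> / x\<^sup>2 * tpow ((x - p) / L) \<alpha>) +
            c2 * (\<bar>(x - p) powr \<theta> - (r - x) powr \<theta>\<bar> / x\<^sup>2 * tpow ((x - p) / L) 0) = Bd x"
        unfolding Bd_def c1_def c2_def tpow_0 by (rule idn[OF qK])
    qed simp
    have nb: "norm (\<phi>' x * ((x - p) powr \<theta> - (r - x) powr \<theta>)) \<le> Bd x" if x: "x \<in> {p..r}" for x
    proof -
      define tq where "tq = tpow ((x - p) / L) \<alpha>"
      define B where "B = tq * X + m * (1 - tq) * Y"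
      have tq01: "0 \<le> tq" "tq \<le> 1" unfolding tq_def using x L al0 by (auto intro!: tpow_nonneg tpow_le1 simp: field_simps)
      have B0: "B \<ge> 0" unfolding B_def using tq01 X0 Y0 m0 by simp
      have xpos: "x > 0" using x pp by auto
      define d where "d = \<bar>deriv f (1/x)\<bar>"
      have d0: "d \<ge> 0" unfolding d_def by simp
      have c: "d powr q \<le> B" unfolding d_def B_def tq_def using conv[OF x] .
      have "d = (d powr q) powr (1/q)" using q1 d0 by (simp add: powr_powr)
      also have "\<dots> \<le> B powr (1/q)" using c q1 by (intro powr_mono2) auto
      also have "\<dots> = K powr (1/q) * (B / K) powr (1/q)"
        using K B0 by (simp add: powr_mult[symmetric])
      also have "\<dots> \<le> K powr (1/q) * (B / K / q + 1 - 1/q)"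
        using bern_powr[of "B/K" q] B0 K q1 by (intro mult_left_mono) auto
      finally have dle: "d \<le> K powr (1/q) * (B / (q * K) + 1 - 1/q)" by (simp add: mult.commute)
      have "norm (\<phi>' x * ((x - p) powr \<theta> - (r - x) powr \<theta>)) = d * (\<bar>(x - p) powr \<theta> - (r - x) powr \<theta>\<bar> / x^2)"
        unfolding \<phi>'_def d_def using xpos by (simp add: abs_mult abs_divide)
      also have "\<dots> \<le> K powr (1/q) * (B / (q * K) + 1 - 1/q) * (\<bar>(x - p) powr \<theta> - (r - x) powr \<theta>\<bar> / x^2)"
        using dle by (intro mult_right_mono) auto
      also have "\<dots> = Bd x" unfolding Bd_def B_def tq_def by (simp add: mult.commute)
      finally show ?thesis .
    qed
    have "\<bar>Pv\<bar> \<le> c1 * (L powr \<theta> * M * Tt a b \<theta> \<alpha>) + c2 * (L powr \<theta> * M * Tt a b \<theta> 0)"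
    proof -
      have "norm (integral {p..r} (\<lambda>x. \<phi>' x * ((x - p) powr \<theta> - (r - x) powr \<theta>))) \<le> integral {p..r} Bd"
        by (rule integral_norm_bound_integral) (use H hBd nb in auto)
      thus ?thesis using integral_unique[OF H] integral_unique[OF hBd] by simp
    qed
    hence "\<bar>I_f f \<theta> a b\<bar> \<le> (1/L) powr \<theta> / 2 * (c1 * (L powr \<theta> * M * Tt a b \<theta> \<alpha>) + c2 * (L powr \<theta> * M * Tt a b \<theta> 0))"
      unfolding Ieq using L by (simp add: abs_mult mult_left_mono)
    also have "\<dots> \<le> M / 2 * (K powr (1/q) * ((C5 \<theta> \<alpha> a b * X + m * (C4 \<theta> a b - C5 \<theta> \<alpha> a b) * Y) / (q * K) + (1 - 1/q) * C4 \<theta> a b))"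
      unfolding c1_def c2_def
      by (rule final_arith[OF K q1 X0 Y0 m0 M0 _ _ cmp1 cmp2 cmp3]) (use L in \<open>simp_all add: powr_divide\<close>)
    finally show ?thesis unfolding N_def C6_def .
  qed
  have Tt0: "0 \<le> Tt a b \<theta> e" if "0 \<le> e" for e
    by (rule has_integral_nonneg[OF Tt_int[OF a0 ab th0 that]])
       (use Ap_pos a0 ab tpow_nonneg in \<open>auto intro!: divide_nonneg_nonneg mult_nonneg_nonneg\<close>)
  have Tmono: "Tt a b \<theta> \<alpha> \<le> Tt a b \<theta> 0"
  proof (rule has_integral_le[OF Tt_int[OF a0 ab th0 al0] Tt_int[OF a0 ab th0, of 0]])
    fix s :: real assume s: "s \<in> {0..1}"
    have "tpow (1 - s) \<alpha> \<le> 1" using s al0 by (intro tpow_le1) auto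
    hence "\<bar>(1 - s) powr \<theta> - s powr \<theta>\<bar> * tpow (1 - s) \<alpha> \<le> \<bar>(1 - s) powr \<theta> - s powr \<theta>\<bar> * tpow (1 - s) 0"
      by (simp add: tpow_def mult_left_le)
    thus "\<bar>(1 - s) powr \<theta> - s powr \<theta>\<bar> * tpow (1 - s) \<alpha> / (Ap a b s)\<^sup>2 \<le> \<bar>(1 - s) powr \<theta> - s powr \<theta>\<bar> * tpow (1 - s) 0 / (Ap a b s)\<^sup>2"
      by (intro divide_right_mono) auto
  qed simp
  have C50: "C5 \<theta> \<alpha> a b \<ge> 0" using cmp1 Tt0[OF al0] by simp
  have C60: "C6 \<theta> \<alpha> a b \<ge> 0" unfolding C6_def using cmp2 Tmono by simp
  have C4eq: "C4 \<theta> a b = C5 \<theta> \<alpha> a b + C6 \<theta> \<alpha> a b" unfolding C6_def by simp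
  have N0: "N \<ge> 0" unfolding N_def using C50 C60 X0 Y0 m0 by simp
  show ?thesis
  proof (cases "N = 0")
    case True
    have "\<bar>I_f f \<theta> a b\<bar> \<le> 0"
    proof (rule eps_le0)
      fix \<delta> :: real assume d: "\<delta> > 0"
      have K: "\<delta> powr q > 0" using d by simp
      have "\<bar>I_f f \<theta> a b\<bar> \<le> M / 2 * ((\<delta> powr q) powr (1/q) * (N / (q * \<delta> powr q) + (1 - 1/q) * C4 \<theta> a b))"
        by (rule boundK[OF K])
      also have "(\<delta> powr q) powr (1/q) = \<delta>" using q1 d by (simp add: powr_powr)
      finally show "\<bar>I_f f \<theta> a b\<bar> \<le> (M / 2 * ((1 - 1/q) * C4 \<theta> a b)) * \<delta>"
        using True by (simp add: mult_ac)
    qed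
    thus ?thesis using True unfolding N_def X_def Y_def by simp
  next
    case False
    hence Npos: "N > 0" using N0 by simp
    have C4pos: "C4 \<theta> a b > 0"
    proof (rule ccontr)
      assume "\<not> C4 \<theta> a b > 0"
      hence "C5 \<theta> \<alpha> a b = 0" "C6 \<theta> \<alpha> a b = 0" using C4eq C50 C60 by auto
      thus False using Npos unfolding N_def by simp
    qed
    define K where "K = N / C4 \<theta> a b"
    have K: "K > 0" unfolding K_def using Npos C4pos by simp
    have "\<bar>I_f f \<theta> a b\<bar> \<le> M / 2 * (K powr (1/q) * (N / (q * K) + (1 - 1/q) * C4 \<theta> a b))"
      by (rule boundK[OF K])
    also have "N / (q * K) + (1 - 1/q) * C4 \<theta> a b = C4 \<theta> a b"
      unfolding K_def using Npos C4pos q1 by (simp add: field_simps)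
    also have "K powr (1/q) * C4 \<theta> a b = C4 \<theta> a b powr (1 - 1/q) * N powr (1/q)"
    proof -
      have "K powr (1/q) * C4 \<theta> a b = N powr (1/q) / C4 \<theta> a b powr (1/q) * C4 \<theta> a b powr 1"
        unfolding K_def using Npos C4pos by (simp add: powr_divide)
      also have "\<dots> = N powr (1/q) * C4 \<theta> a b powr (1 - 1/q)"
        using C4pos by (simp add: powr_diff)
      finally show ?thesis by simp
    qed
    finally show ?thesis unfolding M_def N_def X_def Y_def by (simp add: mult_ac)
  qed
qed

end
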